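(* Let $L$ be a commutative C-loop with neutral element $e$, and let $K=\{x\in L: x^2=e\}$. Then $K$ is a normal subloop of $L$ and the factor loop $L/K$ is a group.
   Context: A C-loop is a loop satisfying $x(y(yz))=((xy)y)z$ for all $x,y,z$. A subloop $K$ of $L$ is normal if $xK=Kx$, $x(yK)=(xy)K$ and $x(Ky)=(xK)y$ for all $x,y\in L$; $L/K$ is the factor loop of cosets. *)

theory Defs
  imports "HOL-Algebra.Coset"
begin

definition loop :: "('a, 'b) monoid_scheme \<Rightarrow> bool" where
  "loop G \<longleftrightarrow>
     \<one>\<^bsub>G\<^esub> \<in> carrier G \<and>
     (\<forall>x\<in>carrier G. \<forall>y\<in>carrier G. x \<otimes>\<^bsub>G\<^esub> y \<in> carrier G) \<and>
     (\<forall>x\<in>carrier G. \<one>\<^bsub>G\<^esub> \<otimes>\<^bsub>G\<^esub> x = x \<and> x \<otimes>\<^bsub>G\<^esub> \<one>\<^bsub>G\<^esub> = x) \<and>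
     (\<forall>a\<in>carrier G. \<forall>b\<in>carrier G. \<exists>!x. x \<in> carrier G \<and> a \<otimes>\<^bsub>G\<^esub> x = b) \<and>
     (\<forall>a\<in>carrier G. \<forall>b\<in>carrier G. \<exists>!y. y \<in> carrier G \<and> y \<otimes>\<^bsub>G\<^esub> a = b)"

definition commutative_loop :: "('a, 'b) monoid_scheme \<Rightarrow> bool" where
  "commutative_loop G \<longleftrightarrow> loop G \<and>
     (\<forall>x\<in>carrier G. \<forall>y\<in>carrier G. x \<otimes>\<^bsub>G\<^esub> y = y \<otimes>\<^bsub>G\<^esub> x)"

definition C_loop :: "('a, 'b) monoid_scheme \<Rightarrow> bool" where
  "C_loop G \<longleftrightarrow> loop G \<and>
     (\<forall>x\<in>carrier G. \<forall>y\<in>carrier G. \<forall>z\<in>carrier G.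
        x \<otimes>\<^bsub>G\<^esub> (y \<otimes>\<^bsub>G\<^esub> (y \<otimes>\<^bsub>G\<^esub> z)) =
        ((x \<otimes>\<^bsub>G\<^esub> y) \<otimes>\<^bsub>G\<^esub> y) \<otimes>\<^bsub>G\<^esub> z)"

definition subloop :: "'a set \<Rightarrow> ('a, 'b) monoid_scheme \<Rightarrow> bool" where
  "subloop K G \<longleftrightarrow> K \<subseteq> carrier G \<and> loop (G\<lparr>carrier := K\<rparr>)"

definition normal_subloop :: "'a set \<Rightarrow> ('a, 'b) monoid_scheme \<Rightarrow> bool" where
  "normal_subloop K G \<longleftrightarrow> subloop K G \<and>
     (\<forall>x\<in>carrier G. x <#\<^bsub>G\<^esub> K = K #>\<^bsub>G\<^esub> x) \<and>
     (\<forall>x\<in>carrier G. \<forall>y\<in>carrier G.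
        x <#\<^bsub>G\<^esub> (y <#\<^bsub>G\<^esub> K) = (x \<otimes>\<^bsub>G\<^esub> y) <#\<^bsub>G\<^esub> K) \<and>
     (\<forall>x\<in>carrier G. \<forall>y\<in>carrier G.
        x <#\<^bsub>G\<^esub> (K #>\<^bsub>G\<^esub> y) = (x <#\<^bsub>G\<^esub> K) #>\<^bsub>G\<^esub> y)"

text \<open>Factor loop L/K: cosets xK with (xK)(yK) = (xy)K, neutral element K
  (well defined when K is normal).\<close>
definition factor_loop :: "('a, 'b) monoid_scheme \<Rightarrow> 'a set \<Rightarrow> 'a set monoid" where
  "factor_loop G K = \<lparr>carrier = (\<lambda>x. x <#\<^bsub>G\<^esub> K) ` carrier G,
     mult = (\<lambda>A B. SOME C. \<exists>x\<in>carrier G. \<exists>y\<in>carrier G.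
               A = x <#\<^bsub>G\<^esub> K \<and> B = y <#\<^bsub>G\<^esub> K \<and> C = (x \<otimes>\<^bsub>G\<^esub> y) <#\<^bsub>G\<^esub> K),
     one = K\<rparr>"

end

theory Submission
  imports Defs
begin

locale ccl =
  fixes L (structure)
  assumes cl: "commutative_loop L" and cc: "C_loop L"
begin

lemma loopL: "loop L" using cl unfolding commutative_loop_def by (rule conjunct1)

lemmas LP = loopL[unfolded loop_def]

lemma one_closed [simp]: "\<one> \<in> carrier L"
  using LP by (rule conjunct1)

lemma m_closed [simp]: "x \<in> carrier L \<Longrightarrow> y \<in> carrier L \<Longrightarrow> x \<otimes> y \<in> carrier L"
  using LP[THEN conjunct2, THEN conjunct1] by (elim ballE) auto

lemma l_one [simp]: "x \<in> carrier L \<Longrightarrow> \<one> \<otimes> x = x"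
  using LP[THEN conjunct2, THEN conjunct2, THEN conjunct1] by (elim ballE) auto

lemma r_one [simp]: "x \<in> carrier L \<Longrightarrow> x \<otimes> \<one> = x"
  using LP[THEN conjunct2, THEN conjunct2, THEN conjunct1] by (elim ballE) auto

lemma comm: "x \<in> carrier L \<Longrightarrow> y \<in> carrier L \<Longrightarrow> x \<otimes> y = y \<otimes> x"
  using cl unfolding commutative_loop_def by (elim conjE ballE) auto

lemma ldiv_ex1: assumes a: "a \<in> carrier L" and b: "b \<in> carrier L"
  shows "\<exists>!x. x \<in> carrier L \<and> a \<otimes> x = b"
proof -
  have h: "\<forall>a\<in>carrier L. \<forall>b\<in>carrier L. \<exists>!x. x \<in> carrier L \<and> a \<otimes> x = b"
    by (rule LP[THEN conjunct2, THEN conjunct2, THEN conjunct2, THEN conjunct1])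
  show ?thesis by (rule bspec[OF bspec[OF h a] b])
qed

lemma ldiv: assumes a: "a \<in> carrier L" and b: "b \<in> carrier L"
  shows "\<exists>x\<in>carrier L. a \<otimes> x = b"
  using ex1_implies_ex[OF ldiv_ex1[OF a b]] unfolding Bex_def .

lemma lcancel: assumes a: "a \<in> carrier L" "x \<in> carrier L" "y \<in> carrier L" "a \<otimes> x = a \<otimes> y"
  shows "x = y"
proof -
  have e: "\<exists>!z. z \<in> carrier L \<and> a \<otimes> z = a \<otimes> x"
    by (rule ldiv_ex1) (simp_all add: a)
  have 1: "(THE z. z \<in> carrier L \<and> a \<otimes> z = a \<otimes> x) = x"
    by (rule the1_equality[OF e]) (simp add: a)
  have 2: "(THE z. z \<in> carrier L \<and> a \<otimes> z = a \<otimes> x) = y"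
    by (rule the1_equality[OF e]) (simp add: a)
  show ?thesis using 1 2 by simp
qed

lemmas CC = cc[unfolded C_loop_def, THEN conjunct2]

lemma Cid: "x \<in> carrier L \<Longrightarrow> y \<in> carrier L \<Longrightarrow> z \<in> carrier L \<Longrightarrow>
   x \<otimes> (y \<otimes> (y \<otimes> z)) = ((x \<otimes> y) \<otimes> y) \<otimes> z"
  using CC by blast

lemma LA: "y \<in> carrier L \<Longrightarrow> z \<in> carrier L \<Longrightarrow> y \<otimes> (y \<otimes> z) = (y \<otimes> y) \<otimes> z"
  using Cid[of \<one> y z] by simp

lemma RA: "x \<in> carrier L \<Longrightarrow> y \<in> carrier L \<Longrightarrow> x \<otimes> (y \<otimes> y) = (x \<otimes> y) \<otimes> y"
  using Cid[of x y \<one>] by simp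

lemma MN: "a \<in> carrier L \<Longrightarrow> y \<in> carrier L \<Longrightarrow> b \<in> carrier L \<Longrightarrow>
   a \<otimes> ((y \<otimes> y) \<otimes> b) = (a \<otimes> (y \<otimes> y)) \<otimes> b"
  using Cid[of a y b] LA[of y b] RA[of a y] by simp

lemma LIP: assumes "z \<in> carrier L" "x \<in> carrier L" "w \<in> carrier L" "z \<otimes> x = \<one>"
  shows "z \<otimes> (x \<otimes> w) = w"
proof -
  obtain c where c: "c \<in> carrier L" "x \<otimes> c = w" using ldiv assms by blast
  have "z \<otimes> (x \<otimes> w) = z \<otimes> (x \<otimes> (x \<otimes> c))" using c by simp
  also have "\<dots> = ((z \<otimes> x) \<otimes> x) \<otimes> c" using Cid[of z x c] assms c by simp
  also have "\<dots> = w" using assms c by simp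
  finally show ?thesis .
qed

lemma H: assumes x: "x \<in> carrier L" and y: "y \<in> carrier L"
  shows "(x \<otimes> y) \<otimes> (x \<otimes> y) = (x \<otimes> x) \<otimes> (y \<otimes> y)"
proof -
  obtain x' where x': "x' \<in> carrier L" "x \<otimes> x' = \<one>" using ldiv x by (meson one_closed)
  have x'x: "x' \<otimes> x = \<one>" using x' x comm by simp
  define u where "u = x \<otimes> y"
  have u: "u \<in> carrier L" using u_def x y by simp
  have b: "u \<otimes> x' = y" using LIP[OF x' (1) x y x'x] comm u_def x' u by simp
  have c: "x' \<otimes> (u \<otimes> u) = x \<otimes> (y \<otimes> y)"
  proof -
    have "x' \<otimes> (u \<otimes> u) = (u \<otimes> u) \<otimes> x'" using comm x' u by simp
    also have "\<dots> = u \<otimes> (u \<otimes> x')" using LA x' u by simp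
    also have "\<dots> = u \<otimes> y" using b by simp
    also have "\<dots> = x \<otimes> (y \<otimes> y)" using RA x y u_def by simp
    finally show ?thesis .
  qed
  have "u \<otimes> u = x \<otimes> (x' \<otimes> (u \<otimes> u))" using LIP[OF x x'(1) _ x'(2)] u by simp
  also have "\<dots> = x \<otimes> (x \<otimes> (y \<otimes> y))" using c by simp
  also have "\<dots> = (x \<otimes> x) \<otimes> (y \<otimes> y)" using LA x y by simp
  finally show ?thesis using u_def by simp
qed

definition Cl :: "'a \<Rightarrow> 'a set" where "Cl s = {z \<in> carrier L. z \<otimes> z = s}"

lemma Cl_mult: assumes x: "x \<in> carrier L" and y: "y \<in> carrier L"
  shows "x <# Cl (y \<otimes> y) = Cl ((x \<otimes> y) \<otimes> (x \<otimes> y))"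
proof
  show "x <# Cl (y \<otimes> y) \<subseteq> Cl ((x \<otimes> y) \<otimes> (x \<otimes> y))"
  proof
    fix z assume "z \<in> x <# Cl (y \<otimes> y)"
    then obtain h where h: "h \<in> carrier L" "h \<otimes> h = y \<otimes> y" "z = x \<otimes> h"
      unfolding l_coset_def Cl_def by auto
    then show "z \<in> Cl ((x \<otimes> y) \<otimes> (x \<otimes> y))"
      unfolding Cl_def using H[OF x h(1)] H[OF x y] x by simp
  qed
  show "Cl ((x \<otimes> y) \<otimes> (x \<otimes> y)) \<subseteq> x <# Cl (y \<otimes> y)"
  proof
    fix z assume z: "z \<in> Cl ((x \<otimes> y) \<otimes> (x \<otimes> y))"
    then have zc: "z \<in> carrier L" and zz: "z \<otimes> z = (x \<otimes> x) \<otimes> (y \<otimes> y)"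
      unfolding Cl_def using H x y by auto
    obtain w where w: "w \<in> carrier L" "x \<otimes> w = z" using ldiv x zc by blast
    have "(x \<otimes> x) \<otimes> (w \<otimes> w) = (x \<otimes> x) \<otimes> (y \<otimes> y)" using H[OF x w(1)] w zz by simp
    then have "w \<otimes> w = y \<otimes> y"
      by (rule lcancel[OF m_closed[OF x x] m_closed[OF w(1) w(1)] m_closed[OF y y]])
    then show "z \<in> x <# Cl (y \<otimes> y)" unfolding l_coset_def Cl_def using w by auto
  qed
qed

lemma Cl_one: "x \<in> carrier L \<Longrightarrow> x <# Cl \<one> = Cl (x \<otimes> x)"
  using Cl_mult[of x \<one>] by simp

lemma r_coset_comm: "x \<in> carrier L \<Longrightarrow> A \<subseteq> carrier L \<Longrightarrow> A #> x = x <# A"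
  unfolding l_coset_def r_coset_def using comm by blast

lemma Cl_sub: "Cl s \<subseteq> carrier L" unfolding Cl_def by blast

lemma Cl_eq: "x \<in> carrier L \<Longrightarrow> y \<in> carrier L \<Longrightarrow> Cl (x \<otimes> x) = Cl (y \<otimes> y) \<Longrightarrow> x \<otimes> x = y \<otimes> y"
  unfolding Cl_def by blast


abbreviation "N \<equiv> Cl \<one>"

lemma cos: "x \<in> carrier L \<Longrightarrow> x <# N = Cl (x \<otimes> x)"
  by (rule Cl_one)

lemma rcos: "x \<in> carrier L \<Longrightarrow> N #> x = Cl (x \<otimes> x)"
  using r_coset_comm[OF _ Cl_sub] cos by simp

lemma inN: "a \<in> N \<Longrightarrow> b \<in> N \<Longrightarrow> x \<in> carrier L \<Longrightarrow> a \<otimes> x = b \<Longrightarrow> x \<in> N"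
proof -
  assume a: "a \<in> N" "b \<in> N" "x \<in> carrier L" "a \<otimes> x = b"
  have ac: "a \<in> carrier L" "a \<otimes> a = \<one>" "b \<otimes> b = \<one>" using a unfolding Cl_def by auto
  have "(a \<otimes> x) \<otimes> (a \<otimes> x) = x \<otimes> x" using H[OF ac(1) a(3)] ac a by simp
  then show ?thesis using a ac unfolding Cl_def by auto
qed

lemma subl: "subloop N L"
  unfolding subloop_def loop_def
proof (simp add: Cl_sub, intro conjI ballI)
  show "\<one> \<in> N" unfolding Cl_def by simp
next
  fix x y assume "x \<in> N" "y \<in> N"
  then show "x \<otimes> y \<in> N" unfolding Cl_def using H by auto
next
  fix x assume "x \<in> N" then show "\<one> \<otimes> x = x" "x \<otimes> \<one> = x" unfolding Cl_def by auto
next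
  fix a b assume ab: "a \<in> N" "b \<in> N"
  then have c: "a \<in> carrier L" "b \<in> carrier L" unfolding Cl_def by auto
  obtain x where x: "x \<in> carrier L" "a \<otimes> x = b" using ldiv c by blast
  have xN: "x \<in> N" using inN ab x by blast
  show "\<exists>!x. x \<in> N \<and> a \<otimes> x = b"
  proof (rule ex1I[of _ x])
    show "x \<in> N \<and> a \<otimes> x = b" using xN x by simp
    fix y assume y: "y \<in> N \<and> a \<otimes> y = b"
    then have yc: "y \<in> carrier L" using Cl_sub by blast
    show "y = x" by (rule lcancel[OF c(1) yc x(1)]) (simp add: y x)
  qed
  show "\<exists>!y. y \<in> N \<and> y \<otimes> a = b"
  proof (rule ex1I[of _ x])
    show "x \<in> N \<and> x \<otimes> a = b" using xN x comm[OF x(1) c(1)] by simp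
    fix y assume y: "y \<in> N \<and> y \<otimes> a = b"
    then have yc: "y \<in> carrier L" using Cl_sub by blast
    have ay: "a \<otimes> y = b" using y comm[OF yc c(1)] by simp
    show "y = x" by (rule lcancel[OF c(1) yc x(1)]) (simp add: x ay)
  qed
qed

lemma normalN: "normal_subloop N L"
  unfolding normal_subloop_def
proof (intro conjI ballI)
  show "subloop N L" by (rule subl)
next
  fix x assume "x \<in> carrier L" then show "x <# N = N #> x" using cos rcos by simp
next
  fix x y assume x: "x \<in> carrier L" and y: "y \<in> carrier L"
  show "x <# (y <# N) = (x \<otimes> y) <# N" using cos Cl_mult x y by simp
  have "(x <# N) #> y = Cl ((y \<otimes> x) \<otimes> (y \<otimes> x))"
    using x y cos r_coset_comm[OF y Cl_sub] Cl_mult by simp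
  also have "\<dots> = x <# (N #> y)" using x y rcos Cl_mult comm by simp
  finally show "x <# (N #> y) = (x <# N) #> y" by simp
qed

lemma FM: assumes x: "x \<in> carrier L" and y: "y \<in> carrier L"
  shows "mult (factor_loop L N) (x <# N) (y <# N) = (x \<otimes> y) <# N"
proof -
  let ?P = "\<lambda>C. \<exists>x1\<in>carrier L. \<exists>y1\<in>carrier L. x <# N = x1 <# N \<and> y <# N = y1 <# N \<and>
     C = (x1 \<otimes> y1) <# N"
  have m: "mult (factor_loop L N) (x <# N) (y <# N) = (SOME C. ?P C)"
    unfolding factor_loop_def by simp
  have ex: "?P ((x \<otimes> y) <# N)" using x y by blast
  have all: "C = (x \<otimes> y) <# N" if "?P C" for C
  proof -
    from that obtain x1 y1 where c: "x1 \<in> carrier L" "y1 \<in> carrier L" "x <# N = x1 <# N"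
      "y <# N = y1 <# N" "C = (x1 \<otimes> y1) <# N" by blast
    have "Cl (x \<otimes> x) = Cl (x1 \<otimes> x1)" using c(3) cos[OF x] cos[OF c(1)] by simp
    then have e1: "x \<otimes> x = x1 \<otimes> x1" using Cl_eq[OF x c(1)] by simp
    have "Cl (y \<otimes> y) = Cl (y1 \<otimes> y1)" using c(4) cos[OF y] cos[OF c(2)] by simp
    then have e2: "y \<otimes> y = y1 \<otimes> y1" using Cl_eq[OF y c(2)] by simp
    show ?thesis using c(5) cos[OF m_closed[OF c(1) c(2)]] cos[OF m_closed[OF x y]]
      H[OF c(1) c(2)] H[OF x y] e1 e2 by simp
  qed
  show ?thesis unfolding m by (rule someI2[where P = ?P, OF ex all])
qed

lemma grp: "group (factor_loop L N)"
proof -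
  have car: "carrier (factor_loop L N) = (\<lambda>x. x <# N) ` carrier L"
    and one: "one (factor_loop L N) = N" unfolding factor_loop_def by simp_all
  have oneN: "N = \<one> <# N" using cos[of \<one>] by simp
  show ?thesis
  proof (rule groupI)
    fix A B assume "A \<in> carrier (factor_loop L N)" "B \<in> carrier (factor_loop L N)"
    then obtain x y where "x \<in> carrier L" "y \<in> carrier L" "A = x <# N" "B = y <# N"
      using car by auto
    then show "A \<otimes>\<^bsub>factor_loop L N\<^esub> B \<in> carrier (factor_loop L N)"
      using FM car by simp
  next
    show "\<one>\<^bsub>factor_loop L N\<^esub> \<in> carrier (factor_loop L N)"
      using car one oneN one_closed by (metis image_eqI)
  next
    fix A B C assume "A \<in> carrier (factor_loop L N)" "B \<in> carrier (factor_loop L N)"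
      "C \<in> carrier (factor_loop L N)"
    then obtain x y z where xyz: "x \<in> carrier L" "y \<in> carrier L" "z \<in> carrier L"
      "A = x <# N" "B = y <# N" "C = z <# N"
      using car by auto
    have "((x \<otimes> y) \<otimes> z) <# N = (x \<otimes> (y \<otimes> z)) <# N"
      using xyz cos[of "(x \<otimes> y) \<otimes> z"] cos[of "x \<otimes> (y \<otimes> z)"] H[of "x \<otimes> y" z] H[of x y]
        H[of x "y \<otimes> z"] H[of y z] MN[of "x \<otimes> x" y "z \<otimes> z"] by simp
    then show "A \<otimes>\<^bsub>factor_loop L N\<^esub> B \<otimes>\<^bsub>factor_loop L N\<^esub> C =
      A \<otimes>\<^bsub>factor_loop L N\<^esub> (B \<otimes>\<^bsub>factor_loop L N\<^esub> C)"
      using xyz FM by simp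
  next
    fix A assume "A \<in> carrier (factor_loop L N)"
    then obtain x where x: "x \<in> carrier L" "A = x <# N" using car by auto
    show "\<one>\<^bsub>factor_loop L N\<^esub> \<otimes>\<^bsub>factor_loop L N\<^esub> A = A"
      using one oneN x FM[of \<one> x] by simp
  next
    fix A assume "A \<in> carrier (factor_loop L N)"
    then obtain x where x: "x \<in> carrier L" "A = x <# N" using car by auto
    obtain x' where x': "x' \<in> carrier L" "x \<otimes> x' = \<one>" using ldiv x one_closed by blast
    have "(x' <# N) \<otimes>\<^bsub>factor_loop L N\<^esub> A = \<one>\<^bsub>factor_loop L N\<^esub>"
      using x x' FM one oneN comm by simp
    moreover have "x' <# N \<in> carrier (factor_loop L N)" using car x' by simp
    ultimately show "\<exists>y\<in>carrier (factor_loop L N). y \<otimes>\<^bsub>factor_loop L N\<^esub> A = \<one>\<^bsub>factor_loop L N\<^esub>"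
      by blast
  qed
qed

end

theorem proposition5p2:
  fixes L :: "('a, 'b) monoid_scheme"
  assumes "commutative_loop L" and "C_loop L"
  defines "K \<equiv> {x \<in> carrier L. x \<otimes>\<^bsub>L\<^esub> x = \<one>\<^bsub>L\<^esub>}"
  shows "normal_subloop K L \<and> group (factor_loop L K)"
proof -
  interpret ccl L using assms by (simp add: ccl_def)
  have "K = Cl \<one>\<^bsub>L\<^esub>" unfolding K_def Cl_def by simp
  then show ?thesis using normalN grp by simp
qed

end
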